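(* Let $x,y,z,t$ be integers and put $n_1=2(xz+yt)$, $n_2=2(zt-xy)$, $n_3=x^2-y^2-z^2+t^2$. If $\gcd(n_1,n_2,n_3)=n>1$, then the quaternion $q=x+yi+zj+tk$ factors as $q=(x'+y'i+z'j+t'k)\,\eta$ with $x',y',z',t'\in\mathbb{Z}$ and $\eta\in\{1+i,\ 1+j,\ \alpha+\beta k\}$ for some integers $\alpha,\beta$ with $\alpha^2+\beta^2>1$.
   Context: Quaternions: $\mathbb{H}(\mathbb{R})$ is the real associative algebra with basis $1,i,j,k$ and $i^2=j^2=k^2=-1$, $ij=-ji=k$, $jk=-kj=i$, $ki=-ik=j$. Products are taken in this (noncommutative) algebra. *)

theory Defs
  imports Main "HOL.Real"
begin

text \<open>Real quaternions H(R): q = a + b i + c j + d k, represented by their four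
  real coordinates, with the Hamilton product (i^2=j^2=k^2=-1, ij=k, jk=i, ki=j).\<close>

datatype quat = Quat (re: real) (im_i: real) (im_j: real) (im_k: real)

fun qmult :: "quat \<Rightarrow> quat \<Rightarrow> quat" (infixl "\<otimes>\<^sub>H" 70) where
  "qmult (Quat a1 b1 c1 d1) (Quat a2 b2 c2 d2) =
     Quat (a1*a2 - b1*b2 - c1*c2 - d1*d2)
          (a1*b2 + b1*a2 + c1*d2 - d1*c2)
          (a1*c2 - b1*d2 + c1*a2 + d1*b2)
          (a1*d2 + b1*c2 - c1*b2 + d1*a2)"

definition iquat :: "int \<Rightarrow> int \<Rightarrow> int \<Rightarrow> int \<Rightarrow> quat" where
  "iquat x y z t = Quat (of_int x) (of_int y) (of_int z) (of_int t)"

end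

theory Submission imports Defs begin

lemma normid:
  fixes x y z t s1 s2 t1 t2 :: int
  shows "(x*s1 - t*s2 + y*t1 + z*t2)^2 + (x*s2 + t*s1 + y*t2 - z*t1)^2 =
    (x^2+t^2)*(s1^2+s2^2) + (y^2+z^2)*(t1^2+t2^2) + 2*((x*y-t*z)*(s1*t1+s2*t2) - (x*z+t*y)*(s2*t1-s1*t2))"
  by (simp add: power2_eq_square algebra_simps)

lemma round_bound:
  fixes A M :: int assumes "M > 0" shows "\<exists>q. 4*(A - q*M)^2 \<le> M^2"
proof -
  define q where "q = (2*A+M) div (2*M)"
  define r where "r = (2*A+M) mod (2*M)"
  have r: "0 \<le> r" "r < 2*M" using assms by (simp_all add: r_def)
  have e: "2*A+M = 2*M*q + r" by (simp add: q_def r_def)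
  have "2*(A - q*M) = r - M" using e by (simp add: algebra_simps)
  hence "4*(A - q*M)^2 = (r-M)^2" by (metis mult.assoc power_mult_distrib power2_eq_square numeral_times_numeral semiring_norm(12) semiring_norm(13))
  also have "\<dots> \<le> M^2" using r by (simp add: abs_le_square_iff[symmetric]) 
  finally show ?thesis by blast
qed

lemma gdiv:
  fixes z1 z2 e1 e2 :: int assumes "e1^2+e2^2 > 0"
  shows "\<exists>q1 q2. (z1 - (q1*e1 - q2*e2))^2 + (z2 - (q1*e2+q2*e1))^2 < e1^2+e2^2"
proof -
  define M where "M = e1^2+e2^2"
  have M: "M > 0" using assms by (simp add: M_def)
  obtain q1 where q1: "4*((z1*e1+z2*e2) - q1*M)^2 \<le> M^2" using round_bound[OF M] by blast
  obtain q2 where q2: "4*((z2*e1-z1*e2) - q2*M)^2 \<le> M^2" using round_bound[OF M] by blast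
  define r1 where "r1 = z1 - (q1*e1 - q2*e2)"
  define r2 where "r2 = z2 - (q1*e2+q2*e1)"
  have id: "(r1^2+r2^2)*M = ((z1*e1+z2*e2) - q1*M)^2 + ((z2*e1-z1*e2) - q2*M)^2"
    by (simp add: r1_def r2_def M_def power2_eq_square algebra_simps)
  have "(2*(r1^2+r2^2))*(2*M) \<le> M * (2*M)" using id q1 q2 by (simp add: algebra_simps power2_eq_square)
  hence "2*(r1^2+r2^2) \<le> M" using M by (simp add: mult_le_cancel_right)
  hence "r1^2+r2^2 < M" using M by (smt (verit))
  thus ?thesis unfolding r1_def r2_def M_def by blast
qed

lemma no_unit:
  fixes x y z t m s1 s2 t1 t2 :: int
  assumes m: "m > 1" and d1: "m dvd (x*y - t*z)" and d2: "m dvd (x*z+t*y)"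
    and d3: "m dvd (x^2+t^2 - (y^2+z^2))"
    and e: "(x*s1 - t*s2 + y*t1 + z*t2)^2 + (x*s2 + t*s1 + y*t2 - z*t1)^2 = 1"
  shows False
proof -
  have "m dvd 2*((x*y-t*z)*(s1*t1+s2*t2) - (x*z+t*y)*(s2*t1-s1*t2))" using d1 d2 by simp
  moreover have "m dvd (x^2+t^2 - (y^2+z^2)) * (t1^2+t2^2)" using d3 by simp
  ultimately obtain k1 k2 where k1: "2*((x*y-t*z)*(s1*t1+s2*t2) - (x*z+t*y)*(s2*t1-s1*t2)) = m*k1"
      and k2: "(x^2+t^2 - (y^2+z^2)) * (t1^2+t2^2) = m*k2" by (metis dvd_def)
  have e2: "1 = (x^2+t^2)*(s1^2+s2^2) + (y^2+z^2)*(t1^2+t2^2) + m*k1" using e[unfolded normid] k1 by simp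
  have "(x^2+t^2) * (t1^2+t2^2) = (y^2+z^2)*(t1^2+t2^2) + m*k2" using k2 by (simp add: algebra_simps)
  hence L: "1 = (x^2+t^2)*((s1^2+s2^2)+(t1^2+t2^2)) + m*(k1-k2)" using e2 by (simp add: algebra_simps)
  have cop: "coprime m (x^2+t^2)"
  proof (rule coprimeI)
    fix c assume "c dvd m" "c dvd x^2+t^2"
    hence "c dvd (x^2+t^2)*((s1^2+s2^2)+(t1^2+t2^2)) + m*(k1-k2)" by simp
    thus "is_unit c" by (metis L)
  qed
  have "m dvd x*(x*y-t*z) + t*(x*z+t*y)" using d1 d2 by simp
  hence "m dvd (x^2+t^2)*y" by (simp add: power2_eq_square algebra_simps)
  hence my: "m dvd y" using cop coprime_dvd_mult_right_iff by blast
  have "m dvd x*(x*z+t*y) - t*(x*y-t*z)" using d1 d2 by simp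
  hence "m dvd (x^2+t^2)*z" by (simp add: power2_eq_square algebra_simps)
  hence mz: "m dvd z" using cop coprime_dvd_mult_right_iff by blast
  have "m dvd y^2+z^2" using my mz by (simp add: power2_eq_square)
  hence "m dvd x^2+t^2" using d3 by (metis diff_add_cancel dvd_add)
  hence "is_unit m" using cop by (meson coprime_common_divisor dvd_refl)
  thus False using m by simp
qed

lemma key:
  fixes x y z t m :: int
  assumes m: "m > 1" and d1: "m dvd (x*y - t*z)" and d2: "m dvd (x*z+t*y)"
    and d3: "m dvd (x^2+t^2 - (y^2+z^2))" and nz: "x^2+t^2+y^2+z^2 > 0"
  shows "\<exists>a b a' b' c d. a^2+b^2 > 1 \<and> x = a'*a - b'*b \<and> t = a'*b + b'*a \<and> y = c*a + d*b \<and> z = d*a - c*b"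
proof -
  define N where "N s1 s2 t1 t2 = (x*s1 - t*s2 + y*t1 + z*t2)^2 + (x*s2 + t*s1 + y*t2 - z*t1)^2" for s1 s2 t1 t2
  define P where "P k = (\<exists>s1 s2 t1 t2. N s1 s2 t1 t2 = int k \<and> k > 0)" for k :: nat
  have "\<exists>k. P k"
  proof (cases "x^2+t^2 > 0")
    case True
    have "N 1 0 0 0 = int (nat (x^2+t^2))" using True by (simp add: N_def)
    thus ?thesis using True unfolding P_def by (metis zero_less_nat_eq)
  next
    case False
    hence F: "y^2+z^2 > 0" using nz by (smt (verit) zero_le_power2)
    have "N 0 0 1 0 = int (nat (y^2+z^2))" using F by (simp add: N_def)
    thus ?thesis using F unfolding P_def by (metis zero_less_nat_eq)
  qed
  then obtain k where Pk: "P k" and min: "\<And>j. j<k \<Longrightarrow> \<not> P j" using exists_least_iff[of P] by blast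
  then obtain s1 s2 t1 t2 where Nk: "N s1 s2 t1 t2 = int k" and kpos: "k > 0" unfolding P_def by blast
  define e1 where "e1 = x*s1 - t*s2 + y*t1 + z*t2"
  define e2 where "e2 = x*s2 + t*s1 + y*t2 - z*t1"
  have ek: "e1^2+e2^2 = int k" using Nk by (simp add: N_def e1_def e2_def)
  have div: "\<exists>q1 q2. x*S1 - t*S2 + y*T1 + z*T2 = q1*e1 - q2*e2 \<and> x*S2 + t*S1 + y*T2 - z*T1 = q1*e2 + q2*e1" for S1 S2 T1 T2
  proof -
    obtain q1 q2 where lt: "(x*S1 - t*S2 + y*T1 + z*T2 - (q1*e1 - q2*e2))^2 + (x*S2 + t*S1 + y*T2 - z*T1 - (q1*e2+q2*e1))^2 < e1^2+e2^2"
      using gdiv[of e1 e2 "x*S1 - t*S2 + y*T1 + z*T2" "x*S2 + t*S1 + y*T2 - z*T1"] ek kpos by auto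
    define r1 where "r1 = x*S1 - t*S2 + y*T1 + z*T2 - (q1*e1 - q2*e2)"
    define r2 where "r2 = x*S2 + t*S1 + y*T2 - z*T1 - (q1*e2+q2*e1)"
    have NR: "N (S1 - (q1*s1 - q2*s2)) (S2 - (q1*s2+q2*s1)) (T1 - (q1*t1 - q2*t2)) (T2 - (q1*t2+q2*t1)) = r1^2+r2^2"
    proof -
      have a: "x*(S1 - (q1*s1 - q2*s2)) - t*(S2 - (q1*s2+q2*s1)) + y*(T1 - (q1*t1 - q2*t2)) + z*(T2 - (q1*t2+q2*t1)) = r1"
        unfolding r1_def e1_def e2_def by (simp add: algebra_simps)
      have b: "x*(S2 - (q1*s2+q2*s1)) + t*(S1 - (q1*s1 - q2*s2)) + y*(T2 - (q1*t2+q2*t1)) - z*(T1 - (q1*t1 - q2*t2)) = r2"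
        unfolding r2_def e1_def e2_def by (simp add: algebra_simps)
      show ?thesis unfolding N_def a b ..
    qed
    have lk: "r1^2+r2^2 < int k" using lt ek unfolding r1_def r2_def by simp
    have "r1^2+r2^2 = 0"
    proof (rule ccontr)
      assume ne: "r1^2+r2^2 \<noteq> 0"
      have ge: "r1^2+r2^2 \<ge> 0" by simp
      have "N (S1 - (q1*s1 - q2*s2)) (S2 - (q1*s2+q2*s1)) (T1 - (q1*t1 - q2*t2)) (T2 - (q1*t2+q2*t1)) = int (nat (r1^2+r2^2))"
        using NR ge by simp
      moreover have "nat (r1^2+r2^2) > 0" using ge ne by (simp only: zero_less_nat_eq)
      ultimately have "P (nat (r1^2+r2^2))" unfolding P_def by blast
      moreover have "nat (r1^2+r2^2) < k" using lk ge by linarith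
      ultimately show False using min by blast
    qed
    hence "r1 = 0" "r2 = 0" by (simp_all add: sum_power2_eq_zero_iff)
    thus ?thesis unfolding r1_def r2_def by (metis eq_iff_diff_eq_0)
  qed
  obtain a' b' where u: "x = a'*e1 - b'*e2" "t = a'*e2 + b'*e1" using div[of 1 0 0 0] by auto
  obtain c d where v: "y = c*e1 - d*e2" "-z = c*e2 + d*e1" using div[of 0 0 1 0] by auto
  have "k \<noteq> 1"
  proof
    assume "k = 1"
    hence "(x*s1 - t*s2 + y*t1 + z*t2)^2 + (x*s2 + t*s1 + y*t2 - z*t1)^2 = 1" using Nk by (simp add: N_def)
    thus False using no_unit[OF m d1 d2 d3] by blast
  qed
  hence "e1^2+e2^2 > 1" using ek kpos by simp
  moreover have "y = c*e1 + (-d)*e2" "z = (-d)*e1 - c*e2" using v by simp_all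
  ultimately show ?thesis using u by blast
qed

lemma quat_k:
  fixes a b a' b' c d :: int
  shows "iquat (a'*a - b'*b) (c*a + d*b) (d*a - c*b) (a'*b + b'*a) = iquat a' c d b' \<otimes>\<^sub>H iquat a 0 0 b"
  unfolding iquat_def by (simp add: algebra_simps)

lemma quat_i:
  fixes a1 b1 c1 d1 :: int
  shows "iquat (a1 - b1) (a1 + b1) (c1 + d1) (d1 - c1) = iquat a1 b1 c1 d1 \<otimes>\<^sub>H iquat 1 1 0 0"
  unfolding iquat_def by (simp add: algebra_simps)

lemma quat_j:
  fixes a1 b1 c1 d1 :: int
  shows "iquat (a1 - c1) (b1 - d1) (a1 + c1) (b1 + d1) = iquat a1 b1 c1 d1 \<otimes>\<^sub>H iquat 1 0 1 0"
  unfolding iquat_def by (simp add: algebra_simps)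

theorem proposition2p9:
  fixes x y z t n :: int
  assumes "n = gcd (2 * (x*z + y*t)) (gcd (2 * (z*t - x*y)) (x^2 - y^2 - z^2 + t^2))"
    and "n > 1"
  shows "\<exists>x' y' z' t' :: int. \<exists>\<eta> :: quat.
           iquat x y z t = iquat x' y' z' t' \<otimes>\<^sub>H \<eta> \<and>
           (\<eta> = iquat 1 1 0 0 \<or> \<eta> = iquat 1 0 1 0 \<or>
            (\<exists>\<alpha> \<beta> :: int. \<alpha>^2 + \<beta>^2 > 1 \<and> \<eta> = iquat \<alpha> 0 0 \<beta>))"
proof -
  have dn1: "n dvd 2 * (x*z + y*t)" using assms(1) by simp
  have dn2: "n dvd 2 * (z*t - x*y)" using assms(1) by (metis gcd_dvd1 gcd_dvd2 dvd_trans)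
  have dn3: "n dvd x^2 - y^2 - z^2 + t^2" using assms(1) by (metis gcd_dvd2 dvd_trans)
  show ?thesis
  proof (cases "even n")
    case True
    hence "even (x^2 - y^2 - z^2 + t^2)" using dn3 by (meson dvd_trans)
    hence ev: "even (x+y+z+t)" by (simp add: power2_eq_square)
    consider "even (x+y) \<and> even (z+t)" | "even (x+z) \<and> even (y+t)" | "even (x+t) \<and> even (y+z)"
      using ev by (auto simp: even_add)
    thus ?thesis
    proof cases
      case 1
      then obtain A D where A: "x + y = 2*A" and D: "z + t = 2*D" by (metis evenE)
      have "iquat x y z t = iquat A (A - x) (z - D) D \<otimes>\<^sub>H iquat 1 1 0 0"
        using quat_i[of A "A - x" "z - D" D] A D by (smt (verit))
      thus ?thesis by blast
    next
      case 2
      then obtain A D where A: "x + z = 2*A" and D: "y + t = 2*D" by (metis evenE)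
      have "iquat x y z t = iquat A D (A - x) (D - y) \<otimes>\<^sub>H iquat 1 0 1 0"
        using quat_j[of A "A - x" D "D - y"] A D by (smt (verit))
      thus ?thesis by blast
    next
      case 3
      then obtain A D where A: "x + t = 2*A" and D: "y + z = 2*D" by (metis evenE)
      have "iquat x y z t = iquat A (y - D) D (A - x) \<otimes>\<^sub>H iquat 1 0 0 1"
        using quat_k[where a=1 and b=1 and a'=A and b'="A - x" and c="y - D" and d=D] A D by (smt (verit))
      moreover have "(1::int)^2 + 1^2 > 1" by simp
      ultimately show ?thesis by blast
    qed
  next
    case False
    have cop: "coprime n 2" using False by (simp add: coprime_commute)
    have "n dvd 2*(x*z + t*y)" using dn1 by (metis mult.commute)
    hence d2: "n dvd (x*z + t*y)" using cop by (meson coprime_dvd_mult_left_iff coprime_dvd_mult_right_iff)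
    have "n dvd (z*t - x*y)" using dn2 cop by (meson coprime_dvd_mult_left_iff coprime_dvd_mult_right_iff)
    hence d1: "n dvd (x*y - t*z)" by (metis dvd_minus_iff minus_diff_eq mult.commute)
    have d3: "n dvd (x^2+t^2 - (y^2+z^2))" using dn3 by (simp add: algebra_simps)
    have nz: "x^2+t^2+y^2+z^2 > 0"
    proof (rule ccontr)
      assume "\<not> ?thesis"
      hence "x^2 = 0 \<and> y^2 = 0 \<and> z^2 = 0 \<and> t^2 = 0"
        using zero_le_power2[of x] zero_le_power2[of y] zero_le_power2[of z] zero_le_power2[of t] by linarith
      hence "x = 0 \<and> y = 0 \<and> z = 0 \<and> t = 0" by simp
      thus False using assms by simp
    qed
    obtain a b a' b' c d where k: "a^2+b^2 > 1" "x = a'*a - b'*b" "t = a'*b + b'*a" "y = c*a + d*b" "z = d*a - c*b"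
      using key[OF assms(2) d1 d2 d3 nz] by blast
    have "iquat x y z t = iquat a' c d b' \<otimes>\<^sub>H iquat a 0 0 b" using quat_k k by simp
    thus ?thesis using k(1) by blast
  qed
qed

end
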